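(* Let $S$ be a linear subspace of $\mathbb{F}_2^n$ with basis $\xi^1,\dots,\xi^d$, and suppose that for every nonzero $m\in\mathbb{F}_2^d$ there is a position $j\in\{1,\dots,n\}$ with $(\xi^1_j,\dots,\xi^d_j)=m$. Let $Q:\mathbb{F}_2^n\to\mathbb{F}_2$ be a quadratic function. If there exist complex phases $c_1,\dots,c_n$ such that $(-1)^{Q(x)}=\prod_{j=1}^n c_j^{x_j}$ for every $x\in S$, then there exist $c'_1,\dots,c'_n\in\{\pm1,\pm i\}$ such that $(-1)^{Q(x)}=\prod_{j=1}^n (c'_j)^{x_j}$ for every $x\in S$.
   Context: A quadratic function $Q:\mathbb{F}_2^n\to\mathbb{F}_2$ is a polynomial of degree at most $2$ in the coordinates with coefficients in $\mathbb{F}_2$. Complex phases are complex numbers of modulus $1$; coordinates $x_j\in\{0,1\}$ are used as integer exponents. *)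

theory Defs
  imports "HOL-Analysis.Analysis"
begin

text \<open>Vectors of F_2^n are modelled as functions nat => bool (True = 1), vanishing outside {0..<n}.
  Addition in F_2 is exclusive or.\<close>

definition f2vecs :: "nat \<Rightarrow> (nat \<Rightarrow> bool) set" where
  "f2vecs n = {x. \<forall>j. n \<le> j \<longrightarrow> \<not> x j}"

definition bitval :: "bool \<Rightarrow> nat" where
  "bitval b = (if b then 1 else 0)"

text \<open>F_2-linear combination  sum_{k<d} m_k xi^k  (m :: F_2^d).\<close>
definition f2comb :: "nat \<Rightarrow> (nat \<Rightarrow> bool) \<Rightarrow> (nat \<Rightarrow> nat \<Rightarrow> bool) \<Rightarrow> (nat \<Rightarrow> bool)" where
  "f2comb d m xi = (\<lambda>j. odd (card {k. k < d \<and> m k \<and> xi k j}))"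

definition f2_lin_indep :: "nat \<Rightarrow> nat \<Rightarrow> (nat \<Rightarrow> nat \<Rightarrow> bool) \<Rightarrow> bool" where
  "f2_lin_indep n d xi \<longleftrightarrow>
     (\<forall>m \<in> f2vecs d. (\<forall>j<n. \<not> f2comb d m xi j) \<longrightarrow> (\<forall>k<d. \<not> m k))"

definition f2span :: "nat \<Rightarrow> (nat \<Rightarrow> nat \<Rightarrow> bool) \<Rightarrow> (nat \<Rightarrow> bool) set" where
  "f2span d xi = {f2comb d m xi | m. m \<in> f2vecs d}"

text \<open>Quadratic function F_2^n -> F_2: polynomial of degree at most 2 in the coordinates
  (using x_i^2 = x_i, the general such polynomial is c + sum a_i x_i + sum_{i<j} b_ij x_i x_j).
  Only values on F_2^n matter.\<close>
definition quadratic_f2 :: "nat \<Rightarrow> ((nat \<Rightarrow> bool) \<Rightarrow> bool) \<Rightarrow> bool" where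
  "quadratic_f2 n Q \<longleftrightarrow> (\<exists>(c::bool) (a::nat \<Rightarrow> bool) (b::nat \<Rightarrow> nat \<Rightarrow> bool).
     \<forall>x \<in> f2vecs n. Q x = odd (bitval c + (\<Sum>i<n. bitval (a i \<and> x i))
                         + (\<Sum>i<n. \<Sum>j<n. if i < j then bitval (b i j \<and> x i \<and> x j) else 0)))"

end

theory Submission
  imports Defs
begin

definition GG :: "complex set" where "GG = {1, -1, \<i>, -\<i>}"

lemma GG_mult: "a \<in> GG \<Longrightarrow> b \<in> GG \<Longrightarrow> a * b \<in> GG"
  unfolding GG_def by auto

definition Rep :: "nat \<Rightarrow> (nat \<Rightarrow> bool) set \<Rightarrow> ((nat \<Rightarrow> bool) \<Rightarrow> complex) \<Rightarrow> bool" where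
  "Rep n S f \<longleftrightarrow> (\<exists>c'. (\<forall>l<n. c' l \<in> GG) \<and> (\<forall>x\<in>S. f x = (\<Prod>l<n. c' l ^ bitval (x l))))"

lemma Rep_one: "Rep n S (\<lambda>x. 1)"
  unfolding Rep_def by (rule exI[of _ "\<lambda>_. 1"]) (auto simp: GG_def)

lemma Rep_mult:
  assumes "Rep n S f" "Rep n S g" shows "Rep n S (\<lambda>x. f x * g x)"
proof -
  obtain c1 where c1: "\<forall>l<n. c1 l \<in> GG" "\<forall>x\<in>S. f x = (\<Prod>l<n. c1 l ^ bitval (x l))"
    using assms(1) unfolding Rep_def by blast
  obtain c2 where c2: "\<forall>l<n. c2 l \<in> GG" "\<forall>x\<in>S. g x = (\<Prod>l<n. c2 l ^ bitval (x l))"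
    using assms(2) unfolding Rep_def by blast
  show ?thesis unfolding Rep_def
    apply (rule exI[of _ "\<lambda>l. c1 l * c2 l"])
    using c1 c2 by (auto simp: GG_mult power_mult_distrib prod.distrib)
qed

lemma Rep_cong: "Rep n S f \<Longrightarrow> (\<And>x. x \<in> S \<Longrightarrow> f x = g x) \<Longrightarrow> Rep n S g"
  unfolding Rep_def by metis

lemma Rep_prod: "finite A \<Longrightarrow> (\<And>a. a \<in> A \<Longrightarrow> Rep n S (f a)) \<Longrightarrow> Rep n S (\<lambda>x. \<Prod>a\<in>A. f a x)"
proof (induction A rule: finite_induct)
  case empty then show ?case by (simp add: Rep_one)
next
  case (insert a A)
  have "Rep n S (\<lambda>x. f a x * (\<Prod>a\<in>A. f a x))"
    using insert by (intro Rep_mult) auto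
  then show ?case using insert by simp
qed

lemma Rep_single:
  assumes "l < n" "v \<in> GG" shows "Rep n S (\<lambda>x. v ^ bitval (x l))"
  unfolding Rep_def
proof (intro exI[of _ "\<lambda>k. if k = l then v else 1"] conjI ballI allI impI)
  fix k assume "k < n" then show "(if k = l then v else 1) \<in> GG" using assms by (auto simp: GG_def)
next
  fix x :: "nat \<Rightarrow> bool"
  have "(\<Prod>k<n. (if k = l then v else 1) ^ bitval (x k)) = (\<Prod>k<n. if k = l then v ^ bitval (x l) else 1)"
    by (rule prod.cong) auto
  also have "\<dots> = v ^ bitval (x l)" using assms by simp
  finally show "v ^ bitval (x l) = (\<Prod>k<n. (if k = l then v else 1) ^ bitval (x k))" by simp
qed

lemma parity_card:
  assumes "finite A" "finite B"
  shows "(odd (card A) \<noteq> odd (card B)) \<longleftrightarrow> odd (card ((A - B) \<union> (B - A)))"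
proof -
  have 1: "card A = card (A - B) + card (A \<inter> B)"
    using assms(1) card_Un_disjoint[of "A - B" "A \<inter> B"] by (metis Diff_Int_distrib2 Diff_disjoint Diff_partition Int_lower1 Un_commute finite_Diff finite_Int inf.idem inf_commute Int_Diff_Un)
  have 2: "card B = card (B - A) + card (A \<inter> B)"
    using assms(2) card_Un_disjoint[of "B - A" "A \<inter> B"] by (metis Diff_Int_distrib2 Diff_disjoint Diff_partition Int_lower1 Un_commute finite_Diff finite_Int inf.idem inf_commute Int_Diff_Un)
  have 3: "card ((A - B) \<union> (B - A)) = card (A - B) + card (B - A)"
    using assms by (intro card_Un_disjoint) auto
  show ?thesis using 1 2 3 by presburger
qed

lemma bool_identity:
  "(-1::complex) ^ bitval (p \<and> q) = \<i> ^ bitval p * \<i> ^ bitval q * (-\<i>) ^ bitval (p \<noteq> q)"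
  by (cases p; cases q) (auto simp: bitval_def)

lemma xor_rep:
  assumes "i < n" "j < n"
    and all_patterns: "\<forall>m \<in> f2vecs d. (\<exists>k<d. m k) \<longrightarrow> (\<exists>j<n. \<forall>k<d. xi k j = m k)"
  shows "Rep n (f2span d xi) (\<lambda>x. (-\<i>) ^ bitval (x i \<noteq> x j))"
proof (cases "\<forall>k<d. xi k i = xi k j")
  case True
  show ?thesis
  proof (rule Rep_cong[OF Rep_one])
    fix x assume "x \<in> f2span d xi"
    then obtain m where x: "x = f2comb d m xi" unfolding f2span_def by blast
    have "{k. k < d \<and> m k \<and> xi k i} = {k. k < d \<and> m k \<and> xi k j}" using True by auto
    then have "x i = x j" unfolding x f2comb_def by simp
    then show "1 = (-\<i>) ^ bitval (x i \<noteq> x j)" by (simp add: bitval_def)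
  qed
next
  case False
  define p where "p = (\<lambda>k. k < d \<and> xi k i \<noteq> xi k j)"
  have "p \<in> f2vecs d" unfolding p_def f2vecs_def by auto
  moreover have "\<exists>k<d. p k" using False unfolding p_def by auto
  ultimately obtain L where L: "L < n" "\<forall>k<d. xi k L = p k" using all_patterns by blast
  show ?thesis
  proof (rule Rep_cong[OF Rep_single[OF L(1)]])
    show "-\<i> \<in> GG" by (simp add: GG_def)
    fix x assume "x \<in> f2span d xi"
    then obtain m where x: "x = f2comb d m xi" unfolding f2span_def by blast
    let ?A = "{k. k < d \<and> m k \<and> xi k i}" and ?B = "{k. k < d \<and> m k \<and> xi k j}"
    have "(?A - ?B) \<union> (?B - ?A) = {k. k < d \<and> m k \<and> xi k L}"
      using L(2) unfolding p_def by auto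
    moreover have "(odd (card ?A) \<noteq> odd (card ?B)) \<longleftrightarrow> odd (card ((?A - ?B) \<union> (?B - ?A)))"
      by (rule parity_card) auto
    ultimately have "(x i \<noteq> x j) = x L" unfolding x f2comb_def by simp
    then show "(-\<i>) ^ bitval (x L) = (-\<i>) ^ bitval (x i \<noteq> x j)" by simp
  qed
qed

lemma bitval_simps[simp]: "bitval False = 0" "bitval True = 1"
  by (auto simp: bitval_def)

lemma neg_one_bitval_odd: "(-1::complex) ^ bitval (odd N) = (-1) ^ N"
  by (auto simp: bitval_def)

theorem mainTheorem4:
  fixes n d :: nat
    and xi :: "nat \<Rightarrow> nat \<Rightarrow> bool"
    and Q :: "(nat \<Rightarrow> bool) \<Rightarrow> bool"
    and c :: "nat \<Rightarrow> complex"
  assumes basis_vecs: "\<forall>k<d. xi k \<in> f2vecs n"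
    and basis_indep: "f2_lin_indep n d xi"
    and all_patterns: "\<forall>m \<in> f2vecs d. (\<exists>k<d. m k) \<longrightarrow> (\<exists>j<n. \<forall>k<d. xi k j = m k)"
    and quad: "quadratic_f2 n Q"
    and phases: "\<forall>j<n. norm (c j) = 1"
    and rep: "\<forall>x \<in> f2span d xi. (-1::complex) ^ bitval (Q x) = (\<Prod>j<n. c j ^ bitval (x j))"
  shows "\<exists>c'::nat \<Rightarrow> complex. (\<forall>j<n. c' j \<in> {1, -1, \<i>, -\<i>}) \<and>
           (\<forall>x \<in> f2span d xi. (-1::complex) ^ bitval (Q x) = (\<Prod>j<n. c' j ^ bitval (x j)))"
proof -
  obtain c0 a b where qd: "\<forall>x \<in> f2vecs n. Q x = odd (bitval c0 + (\<Sum>i<n. bitval (a i \<and> x i))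
                         + (\<Sum>i<n. \<Sum>j<n. if i < j then bitval (b i j \<and> x i \<and> x j) else 0))"
    using quad unfolding quadratic_f2_def by blast
  let ?S = "f2span d xi"
  have span_sub: "x \<in> f2vecs n" if xS: "x \<in> ?S" for x
  proof -
    obtain m where x: "x = f2comb d m xi" using xS unfolding f2span_def by blast
    have e: "{k. k < d \<and> m k \<and> xi k j} = {}" if "n \<le> j" for j
      using basis_vecs that unfolding f2vecs_def by auto
    have "\<forall>j. n \<le> j \<longrightarrow> \<not> f2comb d m xi j"
    proof (intro allI impI)
      fix j assume "n \<le> j"
      then show "\<not> f2comb d m xi j" unfolding f2comb_def by (subst e) auto
    qed
    then show ?thesis unfolding x f2vecs_def by simp
  qed
  define z :: "nat \<Rightarrow> bool" where "z = (\<lambda>_. False)"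
  have z_span: "z \<in> ?S" unfolding f2span_def f2vecs_def f2comb_def z_def
    by (rule CollectI, rule exI[of _ "\<lambda>_. False"]) auto
  have "(-1::complex) ^ bitval (Q z) = 1" using rep z_span by (simp add: z_def bitval_def)
  then have "\<not> Q z" by (auto simp: bitval_def)
  moreover have "Q z = odd (bitval c0)" using qd[rule_format, OF span_sub[OF z_span]] unfolding z_def by (simp cong: if_cong)
  ultimately have c0: "\<not> c0" by (auto simp: bitval_def)
  define F where "F = (\<lambda>x::nat\<Rightarrow>bool. (\<Prod>i<n. (-1::complex) ^ bitval (a i \<and> x i)) *
      (\<Prod>i<n. \<Prod>j<n. (-1::complex) ^ (if i < j then bitval (b i j \<and> x i \<and> x j) else 0)))"
  have eqF: "(-1::complex) ^ bitval (Q x) = F x" if "x \<in> ?S" for x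
  proof -
    let ?A = "\<Sum>i<n. bitval (a i \<and> x i)"
    let ?B = "\<Sum>i<n. \<Sum>j<n. if i < j then bitval (b i j \<and> x i \<and> x j) else 0"
    have "Q x = odd (bitval c0 + ?A + ?B)" using qd span_sub[OF that] by blast
    then have "Q x = odd (?A + ?B)" using c0 by simp
    then have "(-1::complex) ^ bitval (Q x) = (-1) ^ (?A + ?B)"
      by (simp only: neg_one_bitval_odd)
    also have "\<dots> = (-1) ^ ?A * (-1) ^ ?B" by (rule power_add)
    also have "(-1::complex) ^ ?A = (\<Prod>i<n. (-1::complex) ^ bitval (a i \<and> x i))" by (rule power_sum)
    also have "(-1::complex) ^ ?B = (\<Prod>i<n. (-1::complex) ^ (\<Sum>j<n. if i < j then bitval (b i j \<and> x i \<and> x j) else 0))" by (rule power_sum)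
    also have "\<dots> = (\<Prod>i<n. \<Prod>j<n. (-1::complex) ^ (if i < j then bitval (b i j \<and> x i \<and> x j) else 0))"
      by (rule prod.cong[OF refl], rule power_sum)
    finally show ?thesis unfolding F_def .
  qed
  have R1: "Rep n ?S (\<lambda>x. \<Prod>i<n. (-1::complex) ^ bitval (a i \<and> x i))"
  proof (rule Rep_prod)
    fix i assume i: "i \<in> {..<n}"
    show "Rep n ?S (\<lambda>x. (-1::complex) ^ bitval (a i \<and> x i))"
    proof (cases "a i")
      case True
      have "Rep n ?S (\<lambda>x. (-1::complex) ^ bitval (x i))" using i by (intro Rep_single) (auto simp: GG_def)
      then show ?thesis by (rule Rep_cong) (use True in simp)
    next
      case False
      show ?thesis by (rule Rep_cong[OF Rep_one]) (use False in simp)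
    qed
  qed simp
  have R2: "Rep n ?S (\<lambda>x. \<Prod>i<n. \<Prod>j<n. (-1::complex) ^ (if i < j then bitval (b i j \<and> x i \<and> x j) else 0))"
  proof (rule Rep_prod, simp, rule Rep_prod, simp)
    fix i j assume i: "i \<in> {..<n}" and j: "j \<in> {..<n}"
    show "Rep n ?S (\<lambda>x. (-1::complex) ^ (if i < j then bitval (b i j \<and> x i \<and> x j) else 0))"
    proof (cases "i < j \<and> b i j")
      case True
      have "Rep n ?S (\<lambda>x. \<i> ^ bitval (x i) * \<i> ^ bitval (x j) * (-\<i>) ^ bitval (x i \<noteq> x j))"
        using i j by (intro Rep_mult Rep_single xor_rep all_patterns) (auto simp: GG_def)
      then show ?thesis by (rule Rep_cong) (use True in \<open>simp add: bool_identity\<close>)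
    next
      case False
      show ?thesis by (rule Rep_cong[OF Rep_one]) (use False in auto)
    qed
  qed
  have "Rep n ?S F" unfolding F_def by (rule Rep_mult[OF R1 R2])
  then have "Rep n ?S (\<lambda>x. (-1::complex) ^ bitval (Q x))"
    by (rule Rep_cong) (rule eqF[symmetric])
  then show ?thesis unfolding Rep_def GG_def by blast
qed

end
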